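(* Let $W$ be a finite group and $V$ a finite-dimensional irreducible linear representation of $W$ over $\mathbb{R}$ or $\mathbb{C}$. Suppose there exist $v\in V\setminus\{0\}$ and $v'\in Wv$ such that $Wv\setminus\{v,v'\}$ does not span $V$. Then $|Wv|\le 2\dim(V)$.
   Context: $Wv$ denotes the orbit of $v$ under $W$. *)

theory Defs
  imports "HOL-Analysis.Analysis" "HOL-Algebra.Group"
begin

text \<open>A linear representation of the group G on the K-vector space K^n
  (vectors indexed by the finite type 'n), K any field.\<close>
definition lin_rep :: "('g, 'b) monoid_scheme \<Rightarrow> ('g \<Rightarrow> ('k::field)^'n \<Rightarrow> 'k^'n) \<Rightarrow> bool" where
  "lin_rep G \<rho> \<longleftrightarrow>
     (\<forall>g \<in> carrier G. Vector_Spaces.linear (*s) (*s) (\<rho> g)) \<and>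
     (\<forall>g \<in> carrier G. \<forall>h \<in> carrier G. \<rho> (g \<otimes>\<^bsub>G\<^esub> h) = \<rho> g \<circ> \<rho> h) \<and>
     \<rho> \<one>\<^bsub>G\<^esub> = id"

text \<open>Irreducible: the space is nonzero and has no W-invariant subspaces other than 0 and itself.\<close>
definition irreducible_rep :: "('g, 'b) monoid_scheme \<Rightarrow> ('g \<Rightarrow> ('k::field)^'n \<Rightarrow> 'k^'n) \<Rightarrow> bool" where
  "irreducible_rep G \<rho> \<longleftrightarrow>
     lin_rep G \<rho> \<and> (UNIV :: ('k^'n) set) \<noteq> {0} \<and>
     (\<forall>U. vec.subspace U \<and> (\<forall>g \<in> carrier G. \<rho> g ` U \<subseteq> U) \<longrightarrow> U = {0} \<or> U = UNIV)"

definition rep_orbit :: "('g, 'b) monoid_scheme \<Rightarrow> ('g \<Rightarrow> 'v \<Rightarrow> 'v) \<Rightarrow> 'v \<Rightarrow> 'v set" where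
  "rep_orbit G \<rho> v = (\<lambda>g. \<rho> g v) ` carrier G"

end

theory Submission
  imports Defs
begin

lemma fam:
  fixes F :: "('k::field^'n) set set"
  assumes "finite F" "\<forall>X\<in>F. vec.subspace X"
  shows "\<exists>F'\<subseteq>F. card F' + vec.dim (\<Inter>F) \<le> vec.dim (UNIV::('k^'n) set) \<and> \<Inter>F' = \<Inter>F"
  using assms
proof (induction F rule: finite_induct)
  case empty
  then show ?case by auto
next
  case (insert X F)
  then obtain F' where F': "F' \<subseteq> F" "card F' + vec.dim (\<Inter>F) \<le> vec.dim (UNIV::('k^'n) set)" "\<Inter>F' = \<Inter>F"
    by auto
  show ?case
  proof (cases "\<Inter>F \<subseteq> X")
    case True
    then have "\<Inter>(insert X F) = \<Inter>F" by auto
    then show ?thesis using F' by (intro exI[of _ F']) auto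
  next
    case False
    have sX: "vec.subspace X" "vec.subspace (\<Inter>F)" using insert by (auto intro: vec.subspace_Inter)
    have "X \<inter> \<Inter>F \<subset> \<Inter>F" using False by auto
    then have "vec.span (X \<inter> \<Inter>F) \<subset> vec.span (\<Inter>F)"
      using sX by (simp add: vec.span_eq_iff[THEN iffD2] vec.subspace_inter)
    then have d: "vec.dim (X \<inter> \<Inter>F) < vec.dim (\<Inter>F)" by (rule vec.dim_psubset)
    have fin: "finite F'" using F'(1) insert(1) finite_subset by blast
    have "card (insert X F') \<le> card F' + 1" using fin by (simp add: card_insert_if)
    then show ?thesis using F' d
      by (intro exI[of _ "insert X F'"]) auto
  qed
qed

lemma main:
  fixes G :: "('g,'b) monoid_scheme" and \<rho> :: "'g \<Rightarrow> 'k::field^'n \<Rightarrow> 'k^'n"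
  assumes grp: "group G" and fin: "finite (carrier G)" and irr: "irreducible_rep G \<rho>" and v0: "v \<noteq> 0"
    and sp: "vec.span (rep_orbit G \<rho> v - {v, v'}) \<noteq> UNIV"
  shows "card (rep_orbit G \<rho> v) \<le> 2 * vec.dim (UNIV :: ('k^'n) set)"
proof -
  interpret group G by fact
  have lin: "\<And>g. g \<in> carrier G \<Longrightarrow> Vector_Spaces.linear (*s) (*s) (\<rho> g)"
   and mul: "\<And>g h. g \<in> carrier G \<Longrightarrow> h \<in> carrier G \<Longrightarrow> \<rho> (g \<otimes>\<^bsub>G\<^esub> h) = \<rho> g \<circ> \<rho> h"
   and one: "\<rho> \<one>\<^bsub>G\<^esub> = id"
   and irr2: "\<And>U. vec.subspace U \<Longrightarrow> (\<forall>g \<in> carrier G. \<rho> g ` U \<subseteq> U) \<Longrightarrow> U = {0} \<or> U = UNIV"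
    using irr unfolding irreducible_rep_def lin_rep_def by auto
  have mulx: "\<And>g h x. g \<in> carrier G \<Longrightarrow> h \<in> carrier G \<Longrightarrow> \<rho> g (\<rho> h x) = \<rho> (g \<otimes>\<^bsub>G\<^esub> h) x"
    using mul by simp
  define Orb where "Orb = rep_orbit G \<rho> v"
  define U where "U = vec.span (Orb - {v, v'})"
  have sU: "vec.subspace U" by (simp add: U_def vec.subspace_span)
  define F where "F = (\<lambda>g. \<rho> g ` U) ` carrier G"
  have finF: "finite F" using fin by (simp add: F_def)
  have subF: "\<forall>X\<in>F. vec.subspace X"
    unfolding F_def using lin sU vec.linear_subspace_image by blast
  define T where "T = \<Inter>F"
  have sT: "vec.subspace T" unfolding T_def using subF by (rule vec.subspace_Inter)
  have invT: "\<forall>g \<in> carrier G. \<rho> g ` T \<subseteq> T"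
  proof (intro ballI subsetI)
    fix g y assume g: "g \<in> carrier G" and "y \<in> \<rho> g ` T"
    then obtain x where x: "x \<in> T" "y = \<rho> g x" by auto
    show "y \<in> T" unfolding T_def F_def
    proof (clarsimp)
      fix h assume h: "h \<in> carrier G"
      have "x \<in> \<rho> (inv\<^bsub>G\<^esub> g \<otimes>\<^bsub>G\<^esub> h) ` U" using x(1) g h unfolding T_def F_def by auto
      then obtain u where u: "u \<in> U" "x = \<rho> (inv\<^bsub>G\<^esub> g \<otimes>\<^bsub>G\<^esub> h) u" by auto
      have "y = \<rho> (g \<otimes>\<^bsub>G\<^esub> (inv\<^bsub>G\<^esub> g \<otimes>\<^bsub>G\<^esub> h)) u" using u x g h mulx by simp
      also have "g \<otimes>\<^bsub>G\<^esub> (inv\<^bsub>G\<^esub> g \<otimes>\<^bsub>G\<^esub> h) = h" using g h by (simp add: m_assoc[symmetric])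
      finally show "y \<in> \<rho> h ` U" using u by auto
    qed
  qed
  have "\<rho> \<one>\<^bsub>G\<^esub> ` U \<in> F" unfolding F_def by simp
  then have "T \<subseteq> \<rho> \<one>\<^bsub>G\<^esub> ` U" unfolding T_def by blast
  then have "T \<subseteq> U" using one by simp
  then have "T \<noteq> UNIV" using sp unfolding U_def Orb_def by auto
  then have T0: "T = {0}" using irr2[OF sT invT] by auto
  obtain F' where F': "F' \<subseteq> F" "card F' + vec.dim T \<le> vec.dim (UNIV::('k^'n) set)" "\<Inter>F' = T"
    using fam[OF finF subF] unfolding T_def by blast
  have finF': "finite F'" using F'(1) finF finite_subset by blast
  have "\<forall>X\<in>F'. \<exists>g. g \<in> carrier G \<and> X = \<rho> g ` U" using F'(1) unfolding F_def by auto
  then obtain gX where gX: "\<And>X. X \<in> F' \<Longrightarrow> gX X \<in> carrier G \<and> X = \<rho> (gX X) ` U" by metis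
  have cover: "Orb \<subseteq> (\<lambda>(X,b). \<rho> (gX X) (if b then v else v')) ` (F' \<times> UNIV)"
  proof
    fix w assume "w \<in> Orb"
    then obtain h where h: "h \<in> carrier G" "w = \<rho> h v" unfolding Orb_def rep_orbit_def by auto
    have "w \<noteq> 0"
    proof
      assume "w = 0"
      have "v = \<rho> (inv\<^bsub>G\<^esub> h \<otimes>\<^bsub>G\<^esub> h) v" using one h by simp
      also have "\<dots> = \<rho> (inv\<^bsub>G\<^esub> h) w" using h mulx by simp
      also have "\<dots> = 0" using vec.linear_0[OF lin[OF inv_closed[OF h(1)]]] \<open>w = 0\<close> by simp
      finally show False using v0 by simp
    qed
    then obtain X where X: "X \<in> F'" "w \<notin> X" using F'(3) T0 by auto
    define g where "g = gX X"
    have g: "g \<in> carrier G" "X = \<rho> g ` U" using gX[OF X(1)] g_def by auto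
    define u where "u = \<rho> (inv\<^bsub>G\<^esub> g \<otimes>\<^bsub>G\<^esub> h) v"
    have uO: "u \<in> Orb" unfolding u_def Orb_def rep_orbit_def using g h by auto
    have wu1: "\<rho> g u = \<rho> (g \<otimes>\<^bsub>G\<^esub> (inv\<^bsub>G\<^esub> g \<otimes>\<^bsub>G\<^esub> h)) v"
      unfolding u_def by (rule mulx[OF g(1)]) (simp add: g h)
    have "g \<otimes>\<^bsub>G\<^esub> (inv\<^bsub>G\<^esub> g \<otimes>\<^bsub>G\<^esub> h) = h" using g h by (simp add: m_assoc[symmetric])
    then have wu: "\<rho> g u = w" using wu1 h by simp
    have "u \<in> {v, v'}"
    proof (rule ccontr)
      assume "u \<notin> {v, v'}"
      then have "u \<in> Orb - {v, v'}" using uO by simp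
      then have "u \<in> U" unfolding U_def by (rule vec.span_base)
      then have "\<rho> g u \<in> \<rho> g ` U" by (rule imageI)
      then have "w \<in> \<rho> g ` U" using wu by simp
      then show False using X(2) g(2) by simp
    qed
    then show "w \<in> (\<lambda>(X,b). \<rho> (gX X) (if b then v else v')) ` (F' \<times> UNIV)"
    proof
      assume "u = v" then have "w = \<rho> (gX X) v" using wu g_def by simp
      have "(X, True) \<in> F' \<times> UNIV" using X(1) by simp
      then show ?thesis by (rule rev_image_eqI) (simp add: \<open>w = \<rho> (gX X) v\<close>)
    next
      assume "u \<in> {v'}" then have "w = \<rho> (gX X) v'" using wu g_def by simp
      have "(X, False) \<in> F' \<times> UNIV" using X(1) by simp
      then show ?thesis by (rule rev_image_eqI) (simp add: \<open>w = \<rho> (gX X) v'\<close>)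
    qed
  qed
  have "card Orb \<le> card ((\<lambda>(X,b). \<rho> (gX X) (if b then v else v')) ` (F' \<times> (UNIV::bool set)))"
    using cover finF' by (intro card_mono) simp_all
  also have "\<dots> \<le> card (F' \<times> (UNIV::bool set))" using finF' by (intro card_image_le) auto
  also have "\<dots> = 2 * card F'" by (simp add: card_cartesian_product)
  also have "\<dots> \<le> 2 * vec.dim (UNIV::('k^'n) set)" using F'(2) by simp
  finally show ?thesis unfolding Orb_def .
qed
theorem lemma4p4:
  fixes G :: "('g, 'b) monoid_scheme" and \<rho> :: "'g \<Rightarrow> real^'n \<Rightarrow> real^'n"
    and H :: "('h, 'c) monoid_scheme" and \<sigma> :: "'h \<Rightarrow> complex^'m \<Rightarrow> complex^'m"
  shows "(\<forall>v v'. group G \<and> finite (carrier G) \<and> irreducible_rep G \<rho> \<and>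
              v \<noteq> 0 \<and> v' \<in> rep_orbit G \<rho> v \<and>
              vec.span (rep_orbit G \<rho> v - {v, v'}) \<noteq> UNIV
            \<longrightarrow> card (rep_orbit G \<rho> v) \<le> 2 * vec.dim (UNIV :: (real^'n) set))
       \<and> (\<forall>v v'. group H \<and> finite (carrier H) \<and> irreducible_rep H \<sigma> \<and>
              v \<noteq> 0 \<and> v' \<in> rep_orbit H \<sigma> v \<and>
              vec.span (rep_orbit H \<sigma> v - {v, v'}) \<noteq> UNIV
            \<longrightarrow> card (rep_orbit H \<sigma> v) \<le> 2 * vec.dim (UNIV :: (complex^'m) set))"
proof (rule conjI; intro allI impI; elim conjE)
  fix v v' assume "group G" "finite (carrier G)" "irreducible_rep G \<rho>" "v \<noteq> 0"
    "vec.span (rep_orbit G \<rho> v - {v, v'}) \<noteq> UNIV"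
  then show "card (rep_orbit G \<rho> v) \<le> 2 * vec.dim (UNIV :: (real^'n) set)" by (rule main)
next
  fix v v' assume "group H" "finite (carrier H)" "irreducible_rep H \<sigma>" "v \<noteq> 0"
    "vec.span (rep_orbit H \<sigma> v - {v, v'}) \<noteq> UNIV"
  then show "card (rep_orbit H \<sigma> v) \<le> 2 * vec.dim (UNIV :: (complex^'m) set)" by (rule main)
qed

end
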